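(* Let $g$ be an $n$-person no-sink WTT game form satisfying the standing assumptions below. Then $g$ contains no $1$-box.
   Context: Let $X_1,\dots,X_n$ and $A$ be finite nonempty sets. An $n$-person game form is a map $g: X_1\times\cdots\times X_n\to A$; elements of $X=X_1\times\cdots\times X_n$ are strategy profiles. For a direction $i\in[n]$ write $X_{-i}=\prod_{t\neq i}X_t$, and for $s\in X_i$, $y\in X_{-i}$ write $(s,y)$ for the profile with $i$-th coordinate $s$ and other coordinates $y$. The hyperplane perpendicular to direction $i$ at $s\in X_i$ is $H_s=\{x\in X: x_i=s\}$; for a profile $x$ write $H_i^x$ for the hyperplane perpendicular to direction $i$ containing $x$. $g$ is weakly totally tight (WTT) if for every $i\in[n]$, all $s\neq s'$ in $X_i$ and all $y\neq y'$ in $X_{-i}$, at least one of $g(s,y)=g(s,y')$, $g(s,y)=g(s',y)$, $g(s',y')=g(s',y)$, $g(s',y')=g(s,y')$ holds. A set $S\subseteq X$ is a constant region if there is $c\in A$ with $g(x)=c$ for all $x\in S$. For distinct $j,k\in X_i$, $H_j^{\neq}(k)=\{(j,y): y\in X_{-i},\ g(j,y)\neq g(k,y)\}$. We write $H_j\stackrel{c}{\longrightarrow}H_k$ if $g(x)=c$ for all $x\in H_j^{\neq}(k)$, and $H_j\stackrel{c}{\Longrightarrow}H_k$ if $H_j\stackrel{c}{\longrightarrow}H_k$ and there is no outcome $d$ with $H_k\stackrel{d}{\longrightarrow}H_j$. If there exist $k\in X_i\setminus\{j\}$ and $c$ with $H_j\stackrel{c}{\Longrightarrow}H_k$, $c$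 is called the proper outcome of $H_j$ (for WTT $g$ it does not depend on $k$). We say an outcome $a$ is not the proper outcome of a hyperplane $H$ if $H$ has no proper outcome or its proper outcome differs from $a$. $H_j$ is a sink hyperplane if for every $k\in X_i\setminus\{j\}$ there is an outcome $c_k$ with $H_k\stackrel{c_k}{\longrightarrow}H_j$; $g$ is no-sink if there is no sink hyperplane in any direction. A WTT no-sink $g$ contains a $k$-box if there are profiles $x,y$ such that: $g(x)\neq g(y)$; $x$ and $y$ differ in exactly $k$ coordinates $i_1,\dots,i_k$; and for every $1\le t\le k$, $g(x)$ is not the proper outcome of $H_{i_t}^x$ and $g(y)$ is not the proper outcome of $H_{i_t}^y$. Standing assumptions: no hyperplane of $g$ is a constant region, and for every $i$ and distinct $j,k\in X_i$ there is $y\in X_{-i}$ with $g(j,y)\neq g(k,y)$. *)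

theory Defs
  imports Main "HOL-Library.FuncSet"
begin

text \<open>For a profile x, the pair
(s,y) with y in X_{-i} is represented by x(i := s), where y is the restriction of
x to the coordinates other than i.\<close>

definition profiles :: "nat \<Rightarrow> (nat \<Rightarrow> 's set) \<Rightarrow> (nat \<Rightarrow> 's) set" where
  "profiles n X = PiE {0..<n} X"

definition game_form :: "nat \<Rightarrow> (nat \<Rightarrow> 's set) \<Rightarrow> 'o set \<Rightarrow> ((nat \<Rightarrow> 's) \<Rightarrow> 'o) \<Rightarrow> bool" where
  "game_form n X A g \<longleftrightarrow>
     (\<forall>i<n. finite (X i) \<and> X i \<noteq> {}) \<and> finite A \<and> A \<noteq> {} \<and>
     (\<forall>x\<in>profiles n X. g x \<in> A)"

text \<open>y and y' (the restrictions of x and x' to coordinates other than i) differ.\<close>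
definition differ_off :: "nat \<Rightarrow> nat \<Rightarrow> (nat \<Rightarrow> 's) \<Rightarrow> (nat \<Rightarrow> 's) \<Rightarrow> bool" where
  "differ_off n i x x' \<longleftrightarrow> (\<exists>t<n. t \<noteq> i \<and> x t \<noteq> x' t)"

definition WTT :: "nat \<Rightarrow> (nat \<Rightarrow> 's set) \<Rightarrow> ((nat \<Rightarrow> 's) \<Rightarrow> 'o) \<Rightarrow> bool" where
  "WTT n X g \<longleftrightarrow>
     (\<forall>i<n. \<forall>s\<in>X i. \<forall>s'\<in>X i. s \<noteq> s' \<longrightarrow>
        (\<forall>x\<in>profiles n X. \<forall>x'\<in>profiles n X. differ_off n i x x' \<longrightarrow>
           g (x(i := s)) = g (x'(i := s)) \<or>
           g (x(i := s)) = g (x(i := s')) \<or>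
           g (x'(i := s')) = g (x(i := s')) \<or>
           g (x'(i := s')) = g (x'(i := s))))"

definition Hneq :: "nat \<Rightarrow> (nat \<Rightarrow> 's set) \<Rightarrow> ((nat \<Rightarrow> 's) \<Rightarrow> 'o) \<Rightarrow> nat \<Rightarrow> 's \<Rightarrow> 's \<Rightarrow> (nat \<Rightarrow> 's) set" where
  "Hneq n X g i j k = {x \<in> profiles n X. x i = j \<and> g x \<noteq> g (x(i := k))}"

definition arrow :: "nat \<Rightarrow> (nat \<Rightarrow> 's set) \<Rightarrow> ((nat \<Rightarrow> 's) \<Rightarrow> 'o) \<Rightarrow> nat \<Rightarrow> 's \<Rightarrow> 'o \<Rightarrow> 's \<Rightarrow> bool" where
  "arrow n X g i j c k \<longleftrightarrow> (\<forall>x\<in>Hneq n X g i j k. g x = c)"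

definition darrow :: "nat \<Rightarrow> (nat \<Rightarrow> 's set) \<Rightarrow> 'o set \<Rightarrow> ((nat \<Rightarrow> 's) \<Rightarrow> 'o) \<Rightarrow> nat \<Rightarrow> 's \<Rightarrow> 'o \<Rightarrow> 's \<Rightarrow> bool" where
  "darrow n X A g i j c k \<longleftrightarrow> arrow n X g i j c k \<and> \<not> (\<exists>d\<in>A. arrow n X g i k d j)"

definition proper_outcome :: "nat \<Rightarrow> (nat \<Rightarrow> 's set) \<Rightarrow> 'o set \<Rightarrow> ((nat \<Rightarrow> 's) \<Rightarrow> 'o) \<Rightarrow> nat \<Rightarrow> 's \<Rightarrow> 'o \<Rightarrow> bool" where
  "proper_outcome n X A g i j c \<longleftrightarrow> c \<in> A \<and> (\<exists>k\<in>X i. k \<noteq> j \<and> darrow n X A g i j c k)"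

definition sink_hyperplane :: "nat \<Rightarrow> (nat \<Rightarrow> 's set) \<Rightarrow> 'o set \<Rightarrow> ((nat \<Rightarrow> 's) \<Rightarrow> 'o) \<Rightarrow> nat \<Rightarrow> 's \<Rightarrow> bool" where
  "sink_hyperplane n X A g i j \<longleftrightarrow> (\<forall>k\<in>X i. k \<noteq> j \<longrightarrow> (\<exists>c\<in>A. arrow n X g i k c j))"

definition no_sink :: "nat \<Rightarrow> (nat \<Rightarrow> 's set) \<Rightarrow> 'o set \<Rightarrow> ((nat \<Rightarrow> 's) \<Rightarrow> 'o) \<Rightarrow> bool" where
  "no_sink n X A g \<longleftrightarrow> (\<forall>i<n. \<forall>j\<in>X i. \<not> sink_hyperplane n X A g i j)"

definition standing_assumptions :: "nat \<Rightarrow> (nat \<Rightarrow> 's set) \<Rightarrow> ((nat \<Rightarrow> 's) \<Rightarrow> 'o) \<Rightarrow> bool" where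
  "standing_assumptions n X g \<longleftrightarrow>
     (\<forall>i<n. \<forall>s\<in>X i. \<not> (\<exists>c. \<forall>x\<in>profiles n X. x i = s \<longrightarrow> g x = c)) \<and>
     (\<forall>i<n. \<forall>j\<in>X i. \<forall>k\<in>X i. j \<noteq> k \<longrightarrow>
        (\<exists>x\<in>profiles n X. g (x(i := j)) \<noteq> g (x(i := k))))"

definition contains_box :: "nat \<Rightarrow> (nat \<Rightarrow> 's set) \<Rightarrow> 'o set \<Rightarrow> ((nat \<Rightarrow> 's) \<Rightarrow> 'o) \<Rightarrow> nat \<Rightarrow> bool" where
  "contains_box n X A g k \<longleftrightarrow>
     (\<exists>x\<in>profiles n X. \<exists>y\<in>profiles n X. g x \<noteq> g y \<and>
        card {t\<in>{0..<n}. x t \<noteq> y t} = k \<and>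
        (\<forall>t\<in>{0..<n}. x t \<noteq> y t \<longrightarrow>
           \<not> proper_outcome n X A g t (x t) (g x) \<and> \<not> proper_outcome n X A g t (y t) (g y)))"

end

theory Submission
  imports Defs
begin

lemma upd_prof:
  assumes "p \<in> profiles n X" "i < n" "u \<in> X i"
  shows "p(i:=u) \<in> profiles n X"
  using assms unfolding profiles_def PiE_def Pi_def extensional_def by auto

lemma ext_eq:
  assumes "p \<in> profiles n X" "q \<in> profiles n X" "\<And>t. t < n \<Longrightarrow> t \<noteq> i \<Longrightarrow> p t = q t"
  shows "p(i:=u) = q(i:=u)"
proof
  fix t show "(p(i:=u)) t = (q(i:=u)) t"
  proof (cases "t = i")
    case False
    show ?thesis
    proof (cases "t < n")
      case True then show ?thesis using False assms(3) by simp
    next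
      case F2: False
      then have "p t = undefined" "q t = undefined" using assms(1,2)
        unfolding profiles_def PiE_def extensional_def by auto
      then show ?thesis using False by simp
    qed
  qed simp
qed

lemma arrow_iff:
  assumes "i < n" "u \<in> X i"
  shows "arrow n X g i u c v \<longleftrightarrow>
     (\<forall>p\<in>profiles n X. g (p(i:=u)) \<noteq> g (p(i:=v)) \<longrightarrow> g (p(i:=u)) = c)"
proof
  assume a: "arrow n X g i u c v"
  show "\<forall>p\<in>profiles n X. g (p(i:=u)) \<noteq> g (p(i:=v)) \<longrightarrow> g (p(i:=u)) = c"
  proof (intro ballI impI)
    fix p assume p: "p \<in> profiles n X" "g (p(i:=u)) \<noteq> g (p(i:=v))"
    have "p(i:=u) \<in> Hneq n X g i u v"
      using p upd_prof[OF p(1) assms] unfolding Hneq_def by simp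
    then show "g (p(i:=u)) = c" using a unfolding arrow_def by blast
  qed
next
  assume a: "\<forall>p\<in>profiles n X. g (p(i:=u)) \<noteq> g (p(i:=v)) \<longrightarrow> g (p(i:=u)) = c"
  show "arrow n X g i u c v"
    unfolding arrow_def Hneq_def
  proof (intro ballI)
    fix q assume "q \<in> {x \<in> profiles n X. x i = u \<and> g x \<noteq> g (x(i := v))}"
    then have q: "q \<in> profiles n X" "q i = u" "g q \<noteq> g (q(i:=v))" by auto
    have "q(i:=u) = q" using q(2) by auto
    then show "g q = c" using a q by metis
  qed
qed

lemma dich:
  assumes w: "WTT n X g" and i: "i < n" and uv: "u \<in> X i" "v \<in> X i" "u \<noteq> v"
    and p: "p \<in> profiles n X" and q: "q \<in> profiles n X"
    and dp: "g (p(i:=u)) \<noteq> g (p(i:=v))" and dq: "g (q(i:=u)) \<noteq> g (q(i:=v))"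
  shows "g (p(i:=u)) = g (q(i:=u)) \<or> g (p(i:=v)) = g (q(i:=v))"
proof (cases "differ_off n i p q")
  case True
  then show ?thesis using w i uv p q dp dq unfolding WTT_def by metis
next
  case False
  then have "\<And>t. t < n \<Longrightarrow> t \<noteq> i \<Longrightarrow> p t = q t" unfolding differ_off_def by auto
  then have "p(i:=u) = q(i:=u)" using ext_eq[OF p q] by blast
  then show ?thesis by simp
qed

theorem mainTheorem7:
  fixes n :: nat and X :: "nat \<Rightarrow> 's set" and A :: "'o set" and g :: "(nat \<Rightarrow> 's) \<Rightarrow> 'o"
  assumes "game_form n X A g"
    and "WTT n X g"
    and "no_sink n X A g"
    and "standing_assumptions n X g"
  shows "\<not> contains_box n X A g 1"
proof
  assume "contains_box n X A g 1"
  then obtain x y where x: "x \<in> profiles n X" and y: "y \<in> profiles n X" and gxy: "g x \<noteq> g y"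
    and card: "card {t\<in>{0..<n}. x t \<noteq> y t} = 1"
    and np: "\<forall>t\<in>{0..<n}. x t \<noteq> y t \<longrightarrow>
           \<not> proper_outcome n X A g t (x t) (g x) \<and> \<not> proper_outcome n X A g t (y t) (g y)"
    unfolding contains_box_def by blast
  from card obtain i where iset: "{t\<in>{0..<n}. x t \<noteq> y t} = {i}" using card_1_singletonE by blast
  have i: "i < n" and jk: "x i \<noteq> y i" using iset by auto
  have oth: "\<And>t. t < n \<Longrightarrow> t \<noteq> i \<Longrightarrow> x t = y t" using iset by auto
  define j where "j = x i"
  define k where "k = y i"
  have jX: "j \<in> X i" using x i unfolding j_def profiles_def by auto
  have kX: "k \<in> X i" using y i unfolding k_def profiles_def by auto
  have jk': "j \<noteq> k" using jk unfolding j_def k_def .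
  have xj: "x(i:=j) = x" unfolding j_def by simp
  have xk: "x(i:=k) = y"
  proof -
    have "x(i:=k) = y(i:=k)" using ext_eq[OF x y oth] by blast
    then show ?thesis unfolding k_def by simp
  qed
  define a where "a = g x"
  define b where "b = g y"
  have xa: "g (x(i:=j)) = a" using xj a_def by simp
  have xb: "g (x(i:=k)) = b" using xk b_def by simp
  have iin: "i \<in> {0..<n}" using i by simp
  have npj: "\<not> proper_outcome n X A g i j a" using np[rule_format, OF iin jk] unfolding j_def a_def by (rule conjunct1)
  have npk: "\<not> proper_outcome n X A g i k b" using np[rule_format, OF iin jk] unfolding k_def b_def by (rule conjunct2)
  have GA: "\<And>p u. p \<in> profiles n X \<Longrightarrow> u \<in> X i \<Longrightarrow> g (p(i:=u)) \<in> A"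
  proof -
    fix p u assume "p \<in> profiles n X" "u \<in> X i"
    then have "p(i:=u) \<in> profiles n X" by (rule upd_prof[OF _ i])
    then show "g (p(i:=u)) \<in> A" using assms(1) unfolding game_form_def by blast
  qed
  have aA: "a \<in> A" using GA[OF x jX] xj a_def by simp
  have bA: "b \<in> A" using GA[OF x kX] xk b_def by simp
  have xD: "g (x(i:=j)) \<noteq> g (x(i:=k))" using xj xk gxy by simp
  note D = dich[OF assms(2) i]
  have arrA: "arrow n X g i j a k"
  proof (rule ccontr)
    assume "\<not> arrow n X g i j a k"
    then obtain p where p: "p \<in> profiles n X" "g (p(i:=j)) \<noteq> g (p(i:=k))" "g (p(i:=j)) \<noteq> a"
      using arrow_iff[of i n _ X g, OF i jX] by blast
    have "\<forall>q\<in>profiles n X. g (q(i:=k)) \<noteq> g (q(i:=j)) \<longrightarrow> g (q(i:=k)) = b"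
    proof (intro ballI impI)
      fix q assume q: "q \<in> profiles n X" "g (q(i:=k)) \<noteq> g (q(i:=j))"
      have q2: "g (q(i:=j)) \<noteq> g (q(i:=k))" using q(2) by simp
      have 1: "g (p(i:=j)) = g (x(i:=j)) \<or> g (p(i:=k)) = g (x(i:=k))" by (rule D[OF jX kX jk' p(1) x p(2) xD])
      have 2: "g (q(i:=j)) = g (x(i:=j)) \<or> g (q(i:=k)) = g (x(i:=k))" by (rule D[OF jX kX jk' q(1) x q2 xD])
      have 3: "g (q(i:=j)) = g (p(i:=j)) \<or> g (q(i:=k)) = g (p(i:=k))" by (rule D[OF jX kX jk' q(1) p(1) q2 p(2)])
      show "g (q(i:=k)) = b" using 1 2 3 p(3) xa xb by auto
    qed
    then have "arrow n X g i k b j" using arrow_iff[of i n _ X g, OF i kX] by blast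
    moreover have "\<not> darrow n X A g i k b j"
      using npk bA jX jk' unfolding proper_outcome_def by blast
    ultimately have "\<exists>d\<in>A. arrow n X g i j d k" unfolding darrow_def by blast
    then obtain d where d: "d \<in> A" "arrow n X g i j d k" by blast
    have AJd: "\<forall>q\<in>profiles n X. g (q(i:=j)) \<noteq> g (q(i:=k)) \<longrightarrow> g (q(i:=j)) = d"
      using d(2) arrow_iff[of i n _ X g, OF i jX] by (rule iffD1[rotated])
    have "g (x(i:=j)) = d" using AJd x xD by blast
    moreover have "g (p(i:=j)) = d" using AJd p(1,2) by blast
    ultimately show False using p(3) xa by simp
  qed
  obtain k' where k': "k' \<in> X i" "k' \<noteq> j" "\<forall>c\<in>A. \<not> arrow n X g i k' c j"
    using assms(3) i jX unfolding no_sink_def sink_hyperplane_def by blast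
  have "\<not> arrow n X g i j a k'"
  proof
    assume h: "arrow n X g i j a k'"
    have "\<not> darrow n X A g i j a k'"
      using npj aA k'(1,2) unfolding proper_outcome_def by blast
    then show False using h k'(3) unfolding darrow_def by blast
  qed
  then obtain w0 where w0: "w0 \<in> profiles n X" "g (w0(i:=j)) \<noteq> g (w0(i:=k'))" "g (w0(i:=j)) \<noteq> a"
    using arrow_iff[of i n _ X g, OF i jX] by blast
  have "\<not> arrow n X g i k' (g (w0(i:=k'))) j" using k' GA[OF w0(1) k'(1)] by blast
  then obtain w1 where w1: "w1 \<in> profiles n X" "g (w1(i:=k')) \<noteq> g (w1(i:=j))"
       "g (w1(i:=k')) \<noteq> g (w0(i:=k'))"
    using arrow_iff[of i n _ X g, OF i k'(1)] by blast
  define c where "c = g (w0(i:=j))"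
  have w0c: "g (w0(i:=j)) = c" using c_def by simp
  have k'j: "j \<noteq> k'" using k' by simp
  have w1'': "g (w1(i:=j)) \<noteq> g (w1(i:=k'))" using w1(2) by simp
  have w1c: "g (w1(i:=j)) = c"
  proof -
    have "g (w1(i:=j)) = g (w0(i:=j)) \<or> g (w1(i:=k')) = g (w0(i:=k'))"
      by (rule D[OF jX k'(1) k'j w1(1) w0(1) w1'' w0(2)])
    then show ?thesis using w1(3) w0c by auto
  qed
  have constj: "\<And>w. w \<in> profiles n X \<Longrightarrow> g (w(i:=j)) \<noteq> g (w(i:=k')) \<Longrightarrow> g (w(i:=j)) = c"
  proof -
    fix w assume w: "w \<in> profiles n X" "g (w(i:=j)) \<noteq> g (w(i:=k'))"
    have 2: "g (w(i:=j)) = g (w0(i:=j)) \<or> g (w(i:=k')) = g (w0(i:=k'))"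
      by (rule D[OF jX k'(1) k'j w(1) w0(1) w(2) w0(2)])
    have 3: "g (w(i:=j)) = g (w1(i:=j)) \<or> g (w(i:=k')) = g (w1(i:=k'))"
      by (rule D[OF jX k'(1) k'j w(1) w1(1) w(2) w1''])
    show "g (w(i:=j)) = c" using 2 3 w1(3) w0c w1c by auto
  qed
  have ca: "c \<noteq> a" using w0(3) w0c by simp
  have AJ: "\<And>p. p \<in> profiles n X \<Longrightarrow> g (p(i:=j)) \<noteq> g (p(i:=k)) \<Longrightarrow> g (p(i:=j)) = a"
    using arrA arrow_iff[of i n _ X g, OF i jX] by blast
  have kval: "\<And>w. w \<in> profiles n X \<Longrightarrow> g (w(i:=j)) \<noteq> g (w(i:=k')) \<Longrightarrow> g (w(i:=k)) = c"
  proof -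
    fix w assume w: "w \<in> profiles n X" "g (w(i:=j)) \<noteq> g (w(i:=k'))"
    have cw: "g (w(i:=j)) = c" using constj[OF w] .
    show "g (w(i:=k)) = c"
    proof (rule ccontr)
      assume "g (w(i:=k)) \<noteq> c"
      then have "g (w(i:=j)) \<noteq> g (w(i:=k))" using cw by simp
      then have "g (w(i:=j)) = a" by (rule AJ[OF w(1)])
      then show False using cw ca by simp
    qed
  qed
  have w0k: "g (w0(i:=k)) = c" using kval[OF w0(1) w0(2)] .
  have w1k: "g (w1(i:=k)) = c" using kval[OF w1(1) w1''] .
  have kk': "k \<noteq> k'" using w0(2) w0k w0c by auto
  have w0d: "g (w0(i:=k)) \<noteq> g (w0(i:=k'))" using w0k w0(2) w0c by simp
  have w1d: "g (w1(i:=k)) \<noteq> g (w1(i:=k'))" using w1k w1'' w1c by simp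
  have constk: "\<And>w. w \<in> profiles n X \<Longrightarrow> g (w(i:=k)) \<noteq> g (w(i:=k')) \<Longrightarrow> g (w(i:=k)) = c"
  proof -
    fix w assume w: "w \<in> profiles n X" "g (w(i:=k)) \<noteq> g (w(i:=k'))"
    have 2: "g (w(i:=k)) = g (w0(i:=k)) \<or> g (w(i:=k')) = g (w0(i:=k'))"
      by (rule D[OF kX k'(1) kk' w(1) w0(1) w(2) w0d])
    have 3: "g (w(i:=k)) = g (w1(i:=k)) \<or> g (w(i:=k')) = g (w1(i:=k'))"
      by (rule D[OF kX k'(1) kk' w(1) w1(1) w(2) w1d])
    show "g (w(i:=k)) = c" using 2 3 w0k w1k w1(3) by auto
  qed
  have xk': "g (x(i:=k')) = a"
  proof (rule ccontr)
    assume "g (x(i:=k')) \<noteq> a"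
    then have "g (x(i:=j)) \<noteq> g (x(i:=k'))" using xa by simp
    then have "g (x(i:=j)) = c" by (rule constj[OF x])
    then show False using xa ca by simp
  qed
  have "g (x(i:=k)) \<noteq> g (x(i:=k'))" using xk' xD xa by simp
  then have "g (x(i:=k)) = c" by (rule constk[OF x])
  then have bc: "b = c" using xb by simp
  have arrB: "arrow n X g i k b k'" using arrow_iff[of i n _ X g, OF i kX] constk bc by blast
  have AK: "\<And>d p. arrow n X g i k' d k \<Longrightarrow> p \<in> profiles n X \<Longrightarrow> g (p(i:=k')) \<noteq> g (p(i:=k)) \<Longrightarrow> g (p(i:=k')) = d"
    using arrow_iff[of i n _ X g, OF i k'(1)] by blast
  have "\<not> (\<exists>d\<in>A. arrow n X g i k' d k)"
  proof
    assume "\<exists>d\<in>A. arrow n X g i k' d k"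
    then obtain d where d: "arrow n X g i k' d k" by blast
    have "g (w0(i:=k')) = d" by (rule AK[OF d w0(1)]) (use w0d in simp)
    moreover have "g (w1(i:=k')) = d" by (rule AK[OF d w1(1)]) (use w1d in simp)
    ultimately show False using w1(3) by simp
  qed
  then have "darrow n X A g i k b k'" using arrB unfolding darrow_def by blast
  then have "proper_outcome n X A g i k b"
    unfolding proper_outcome_def using bA k'(1) kk' by (metis)
  then show False using npk by simp
qed

end
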